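(* Let $z\in\mathbb{R}_{\ge0}^s$ with $\sum_j z_j>0$, $\eta>0$, and let $\tilde z_k=\max\big(z_k-\eta\frac{\partial\mathcal{H}}{\partial z_k}(z),0\big)$ (with $\tilde z_k=0$ when $z_k=0$), and suppose $\sum_j\tilde z_j>0$. Let $p_i=z_i/\sum_j z_j$ and $\tilde p_i=\tilde z_i/\sum_j\tilde z_j$. Then for all $k,k'$ with $z_k<z_{k'}$ we have $\tilde p_k\le\tilde p_{k'}$, i.e. the order of state probabilities is preserved.
   Context: $\mathcal{H}(z)=-\sum_i \frac{z_i}{\sum_j z_j}\log\frac{z_i}{\sum_j z_j}$ with $0\log0=0$; for $z_k>0$ the gradient is the partial derivative, and for $z_k=0$ it is regarded as $+\infty$. *)

theory Defs
  imports "HOL-Analysis.Analysis"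
begin

text \<open>Shannon entropy of the normalized vector z / sum z, with the convention 0 log 0 = 0.
  Vectors in R^s are modelled as real^'n with 'n a finite index type (s = CARD('n)).\<close>
definition entropy :: "real^'n::finite \<Rightarrow> real" where
  "entropy z = - (\<Sum>i\<in>UNIV. let p = z$i / (\<Sum>j\<in>UNIV. z$j) in
                     (if p = 0 then 0 else p * ln p))"

text \<open>Partial derivative of the entropy with respect to the k-th coordinate at z
  (meaningful for z k > 0).\<close>
definition entropy_partial :: "real^'n::finite \<Rightarrow> 'n \<Rightarrow> real" where
  "entropy_partial z k = deriv (\<lambda>t. entropy (\<chi> j. if j = k then t else z$j)) (z$k)"

text \<open>One projected gradient step: for z_k > 0, max(z_k - eta dH/dz_k, 0);
  for z_k = 0 the gradient is regarded as +infinity, so the result is 0.\<close>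
definition grad_step :: "real \<Rightarrow> real^'n::finite \<Rightarrow> real^'n" where
  "grad_step \<eta> z = (\<chi> k. if z$k = 0 then 0 else max (z$k - \<eta> * entropy_partial z k) 0)"

end

theory Submission
  imports Defs
begin

definition gg :: "real \<Rightarrow> real" where "gg x = (if x = 0 then 0 else x * ln x)"

lemma entropy_formula:
  fixes w :: "real^'n::finite"
  assumes nn: "\<And>j. w$j \<ge> 0" and T: "(\<Sum>j\<in>UNIV. w$j) > 0"
  shows "entropy w = ln (\<Sum>j\<in>UNIV. w$j) - (\<Sum>i\<in>UNIV. gg (w$i)) / (\<Sum>j\<in>UNIV. w$j)"
proof -
  define T where "T = (\<Sum>j\<in>UNIV. w$j)"
  have T0: "T > 0" using T T_def by simp
  have trm: "(let p = w$i / T in (if p = 0 then 0 else p * ln p))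
        = (gg (w$i) - w$i * ln T) / T" for i
  proof (cases "w$i = 0")
    case True then show ?thesis by (simp add: gg_def)
  next
    case False
    then have "w$i > 0" using nn[of i] by simp
    then show ?thesis using T0 False
      by (simp add: gg_def ln_div field_simps)
  qed
  have "entropy w = - (\<Sum>i\<in>UNIV. (gg (w$i) - w$i * ln T) / T)"
    unfolding entropy_def T_def[symmetric] using trm by simp
  also have "\<dots> = - (((\<Sum>i\<in>UNIV. gg (w$i)) - T * ln T) / T)"
    by (simp add: sum_divide_distrib[symmetric] sum_subtractf sum_distrib_right[symmetric] T_def)
  also have "\<dots> = ln T - (\<Sum>i\<in>UNIV. gg (w$i)) / T" using T0 by (simp add: field_simps)
  finally show ?thesis unfolding T_def .
qed

lemma sum_upd:
  fixes h :: "real \<Rightarrow> real" and z :: "real^'n::finite"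
  shows "(\<Sum>i\<in>UNIV. h ((\<chi> j. if j = k then t else z$j) $ i)) = (\<Sum>i\<in>UNIV. h (z$i)) - h (z$k) + h t"
proof -
  have "(\<Sum>i\<in>UNIV. h ((\<chi> j. if j = k then t else z$j) $ i)) = h t + (\<Sum>i\<in>UNIV-{k}. h (z$i))"
    by (simp add: sum.remove[of UNIV k])
  moreover have "(\<Sum>i\<in>UNIV. h (z$i)) = h (z$k) + (\<Sum>i\<in>UNIV-{k}. h (z$i))"
    by (simp add: sum.remove[of UNIV k])
  ultimately show ?thesis by simp
qed

lemma partial_formula:
  fixes z :: "real^'n::finite"
  assumes nn: "\<And>j. z$j \<ge> 0" and zk: "z$k > 0"
  shows "entropy_partial z k = - ln (z$k) / (\<Sum>j\<in>UNIV. z$j)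
           + (\<Sum>i\<in>UNIV. gg (z$i)) / (\<Sum>j\<in>UNIV. z$j)^2"
proof -
  define S where "S = (\<Sum>j\<in>UNIV. z$j)"
  define G where "G = (\<Sum>i\<in>UNIV. gg (z$i))"
  define A where "A = G - gg (z$k)"
  define B where "B = S - z$k"
  have B0: "B \<ge> 0" unfolding B_def S_def
    using sum.remove[of UNIV k "\<lambda>j. z$j"] nn by (simp add: sum_nonneg)
  define F where "F = (\<lambda>t. ln (B + t) - (A + t * ln t) / (B + t))"
  have eq: "entropy (\<chi> j. if j = k then t else z$j) = F t" if t: "t > 0" for t
  proof -
    let ?w = "(\<chi> j. if j = k then t else z$j) :: real^'n"
    have s: "(\<Sum>j\<in>UNIV. ?w$j) = B + t"
      using sum_upd[of "\<lambda>x. x" k t z] by (simp add: B_def S_def)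
    have g: "(\<Sum>i\<in>UNIV. gg (?w$i)) = A + t * ln t"
      using sum_upd[of gg k t z] t by (simp add: A_def G_def gg_def)
    have "entropy ?w = ln (\<Sum>j\<in>UNIV. ?w$j) - (\<Sum>i\<in>UNIV. gg (?w$i)) / (\<Sum>j\<in>UNIV. ?w$j)"
      by (rule entropy_formula) (use nn t B0 s in auto)
    then show ?thesis using s g by (simp add: F_def)
  qed
  have ev: "\<forall>\<^sub>F t in nhds (z$k). entropy (\<chi> j. if j = k then t else z$j) = F t"
    using eventually_nhds_in_open[of "{0<..}" "z$k"] zk eq
    by (auto elim!: eventually_mono)
  have Bt: "B + z$k > 0" using B0 zk by simp
  have "(F has_real_derivative
      (1 / (B + z$k) - ((ln (z$k) + 1) * (B + z$k) - (A + z$k * ln (z$k))) / (B + z$k)^2)) (at (z$k))"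
    unfolding F_def using Bt zk
    by (auto intro!: derivative_eq_intros simp: power2_eq_square)
  then have d: "deriv F (z$k) = 1 / (B + z$k) - ((ln (z$k) + 1) * (B + z$k) - (A + z$k * ln (z$k))) / (B + z$k)^2"
    by (rule DERIV_imp_deriv)
  have "entropy_partial z k = deriv F (z$k)"
    unfolding entropy_partial_def using ev by (rule deriv_cong_ev) simp
  also have "\<dots> = - ln (z$k) / S + G / S^2"
  proof -
    have e1: "B + z$k = S" by (simp add: B_def)
    have e2: "A + z$k * ln (z$k) = G" using zk by (simp add: A_def gg_def)
    have S0: "S > 0" using Bt e1 by simp
    show ?thesis unfolding d e1 e2 using S0
      by (simp add: field_simps power2_eq_square)
  qed
  finally show ?thesis unfolding S_def G_def .
qed

theorem corollary8:
  fixes z :: "real^'n::finite" and \<eta> :: real and k k' :: 'n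
  assumes nonneg: "\<And>j. z$j \<ge> 0"
    and pos: "(\<Sum>j\<in>UNIV. z$j) > 0"
    and eta: "\<eta> > 0"
    and pos_step: "(\<Sum>j\<in>UNIV. grad_step \<eta> z $ j) > 0"
    and lt: "z$k < z$k'"
  shows "grad_step \<eta> z $ k / (\<Sum>j\<in>UNIV. grad_step \<eta> z $ j)
         \<le> grad_step \<eta> z $ k' / (\<Sum>j\<in>UNIV. grad_step \<eta> z $ j)"
proof -
  have le: "grad_step \<eta> z $ k \<le> grad_step \<eta> z $ k'"
  proof (cases "z$k = 0")
    case True
    then show ?thesis by (simp add: grad_step_def)
  next
    case False
    define S where "S = (\<Sum>j\<in>UNIV. z$j)"
    define c where "c = (\<Sum>i\<in>UNIV. gg (z$i)) / S^2"
    have zk: "z$k > 0" using False nonneg[of k] by simp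
    have zk': "z$k' > 0" using zk lt by simp
    have p1: "entropy_partial z k = - ln (z$k) / S + c"
      using partial_formula[OF nonneg zk] by (simp add: S_def c_def)
    have p2: "entropy_partial z k' = - ln (z$k') / S + c"
      using partial_formula[OF nonneg zk'] by (simp add: S_def c_def)
    have "ln (z$k) < ln (z$k')" using zk lt by simp
    then have "ln (z$k) / S \<le> ln (z$k') / S" using pos S_def
      by (simp add: divide_right_mono)
    then have m: "\<eta> * (ln (z$k) / S) \<le> \<eta> * (ln (z$k') / S)"
      using eta by (intro mult_left_mono) auto
    have e1: "\<eta> * entropy_partial z k = - (\<eta> * (ln (z$k) / S)) + \<eta> * c"
      unfolding p1 by (simp add: algebra_simps)
    have e2: "\<eta> * entropy_partial z k' = - (\<eta> * (ln (z$k') / S)) + \<eta> * c"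
      unfolding p2 by (simp add: algebra_simps)
    have "z$k - \<eta> * entropy_partial z k \<le> z$k' - \<eta> * entropy_partial z k'"
      unfolding e1 e2 using m lt by linarith
    then show ?thesis using zk zk' by (simp add: grad_step_def)
  qed
  show ?thesis using le pos_step by (simp add: divide_right_mono)
qed

end
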